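(* Let $q\ge 2$ and $n\ge 1$. If a quasi-complementary Lee metric Gray code of $q$-ary $n$-tuples exists, then $n$ is even, or $q$ is odd, or $n=1$.
   Context: The Lee distance between $v,u\in\mathbb{Z}_q^n$ is $\sum_{i=1}^n \min\{|v_i-u_i|,\,q-|v_i-u_i|\}$ (entries regarded as integers in $\{0,\ldots,q-1\}$). A quasi-complementary Lee metric Gray code of $q$-ary $n$-tuples is an ordering $G(0),\ldots,G(q^n-1)$ of all $q^n$ words of $\mathbb{Z}_q^n$ such that consecutive words $G(i),G(i+1)$ ($0\le i<q^n-1$) have Lee distance $1$, and $G((i+q^{n-1})\bmod q^n)=G(i)+(1,1,\ldots,1)$ for all $i$, with addition of words in $\mathbb{Z}_q^n$. *)

theory Defs
  imports Main
begin

definition words :: "nat \<Rightarrow> nat \<Rightarrow> (nat \<Rightarrow> nat) set" where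
  "words q n = {v. (\<forall>i<n. v i < q) \<and> (\<forall>i\<ge>n. v i = 0)}"

definition lee_dist :: "nat \<Rightarrow> nat \<Rightarrow> (nat \<Rightarrow> nat) \<Rightarrow> (nat \<Rightarrow> nat) \<Rightarrow> nat" where
  "lee_dist q n v u = (\<Sum>i<n. min (nat \<bar>int (v i) - int (u i)\<bar>) (q - nat \<bar>int (v i) - int (u i)\<bar>))"

definition word_add :: "nat \<Rightarrow> nat \<Rightarrow> (nat \<Rightarrow> nat) \<Rightarrow> (nat \<Rightarrow> nat) \<Rightarrow> (nat \<Rightarrow> nat)" where
  "word_add q n v u = (\<lambda>i. if i < n then (v i + u i) mod q else 0)"

definition all_ones :: "nat \<Rightarrow> (nat \<Rightarrow> nat)" where
  "all_ones n = (\<lambda>i. if i < n then 1 else 0)"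

definition quasi_compl_lee_gray :: "nat \<Rightarrow> nat \<Rightarrow> (nat \<Rightarrow> (nat \<Rightarrow> nat)) \<Rightarrow> bool" where
  "quasi_compl_lee_gray q n G \<longleftrightarrow>
     bij_betw G {..<q ^ n} (words q n) \<and>
     (\<forall>i. i + 1 < q ^ n \<longrightarrow> lee_dist q n (G i) (G (i + 1)) = 1) \<and>
     (\<forall>i<q ^ n. G ((i + q ^ (n - 1)) mod q ^ n) = word_add q n (G i) (all_ones n))"

end

theory Submission
  imports Defs
begin

lemma coord_par:
  fixes a b q :: nat
  assumes "even q" "a < q" "b < q"
  shows "even (a + b + min (nat \<bar>int a - int b\<bar>) (q - nat \<bar>int a - int b\<bar>))"
proof -
  obtain k where k: "q = 2 * k" using assms(1) by blast
  have "a \<le> b \<or> b \<le> a" by auto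
  then show ?thesis
  proof
    assume h: "a \<le> b"
    obtain d where d: "b = a + d" using h le_Suc_ex by blast
    then have e: "nat \<bar>int a - int b\<bar> = d" by auto
    have "d \<le> q" using d assms(3) by auto
    then show ?thesis
    proof (cases "d \<le> q - d")
      case True
      then have "a + b + min d (q - d) = 2 * (a + d)" using d by (simp add: min_def)
      then have "a + b + min (nat \<bar>int a - int b\<bar>) (q - nat \<bar>int a - int b\<bar>) = 2 * (a + d)" by (simp only: e)
      then show ?thesis by (metis dvd_triv_left)
    next
      case False
      then have "a + b + min d (q - d) = 2 * (a + k)" using d k \<open>d \<le> q\<close> by (simp add: min_def)
      then have "a + b + min (nat \<bar>int a - int b\<bar>) (q - nat \<bar>int a - int b\<bar>) = 2 * (a + k)" by (simp only: e)
      then show ?thesis by (metis dvd_triv_left)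
    qed
  next
    assume h: "b \<le> a"
    obtain d where d: "a = b + d" using h le_Suc_ex by blast
    then have e: "nat \<bar>int a - int b\<bar> = d" by auto
    have "d \<le> q" using d assms(2) by auto
    then show ?thesis
    proof (cases "d \<le> q - d")
      case True
      then have "a + b + min d (q - d) = 2 * (b + d)" using d by (simp add: min_def)
      then have "a + b + min (nat \<bar>int a - int b\<bar>) (q - nat \<bar>int a - int b\<bar>) = 2 * (b + d)" by (simp only: e)
      then show ?thesis by (metis dvd_triv_left)
    next
      case False
      then have "a + b + min d (q - d) = 2 * (b + k)" using d k \<open>d \<le> q\<close> by (simp add: min_def)
      then have "a + b + min (nat \<bar>int a - int b\<bar>) (q - nat \<bar>int a - int b\<bar>) = 2 * (b + k)" by (simp only: e)
      then show ?thesis by (metis dvd_triv_left)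
    qed
  qed
qed

definition S :: "nat \<Rightarrow> (nat \<Rightarrow> nat) \<Rightarrow> nat" where
  "S n v = (\<Sum>i<n. v i)"

lemma step_par:
  assumes "even q" "v \<in> words q n" "u \<in> words q n" "lee_dist q n v u = 1"
  shows "odd (S n v + S n u)"
proof -
  let ?m = "\<lambda>i. min (nat \<bar>int (v i) - int (u i)\<bar>) (q - nat \<bar>int (v i) - int (u i)\<bar>)"
  have "\<forall>i\<in>{..<n}. even (v i + u i + ?m i)"
    using assms(1-3) coord_par unfolding words_def by auto
  then have "even (\<Sum>i<n. v i + u i + ?m i)" by (intro dvd_sum) auto 
  also have "(\<Sum>i<n. v i + u i + ?m i) = S n v + S n u + lee_dist q n v u"
    unfolding S_def lee_dist_def by (simp add: sum.distrib)
  finally show ?thesis using assms(4) by simp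
qed

lemma add_par:
  assumes "even q" "q \<ge> 2" "v \<in> words q n"
  shows "even (S n (word_add q n v (all_ones n)) + S n v + n)"
proof -
  have "\<forall>i\<in>{..<n}. even (word_add q n v (all_ones n) i + v i + 1)"
  proof
    fix i assume "i \<in> {..<n}"
    then have i: "i < n" "v i < q" using assms(3) unfolding words_def by auto
    show "even (word_add q n v (all_ones n) i + v i + 1)"
    proof (cases "v i + 1 = q")
      case True
      then show ?thesis using i assms(1) unfolding word_add_def all_ones_def by auto
    next
      case False
      then have "v i + 1 < q" using i by auto
      then show ?thesis using i unfolding word_add_def all_ones_def by auto
    qed
  qed
  then have "even (\<Sum>i<n. word_add q n v (all_ones n) i + v i + 1)" by (intro dvd_sum) auto
  also have "(\<Sum>i<n. word_add q n v (all_ones n) i + v i + 1) = S n (word_add q n v (all_ones n)) + S n v + n"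
    unfolding S_def sum.distrib by simp
  finally show ?thesis .
qed

theorem proposition1:
  fixes q n :: nat
  assumes "q \<ge> 2" and "n \<ge> 1"
    and "\<exists>G. quasi_compl_lee_gray q n G"
  shows "even n \<or> odd q \<or> n = 1"
proof (rule ccontr)
  assume H: "\<not> (even n \<or> odd q \<or> n = 1)"
  then have q: "even q" and nn: "odd n" "n \<ge> 2" using assms(2) by auto
  obtain G where G: "quasi_compl_lee_gray q n G" using assms(3) by blast
  have bij: "bij_betw G {..<q ^ n} (words q n)"
    and st: "\<And>i. i + 1 < q ^ n \<Longrightarrow> lee_dist q n (G i) (G (i + 1)) = 1"
    and cp: "\<And>i. i < q ^ n \<Longrightarrow> G ((i + q ^ (n - 1)) mod q ^ n) = word_add q n (G i) (all_ones n)"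
    using G unfolding quasi_compl_lee_gray_def by auto
  have W: "\<And>k. k < q ^ n \<Longrightarrow> G k \<in> words q n" using bij bij_betwE by blast
  have P: "k < q ^ n \<Longrightarrow> even (S n (G k) + S n (G 0) + k)" for k
  proof (induction k)
    case 0 then show ?case by simp
  next
    case (Suc k)
    then have "odd (S n (G k) + S n (G (k+1)))"
      using step_par[OF q W W st] by simp
    with Suc show ?case by auto
  qed
  have lt: "q ^ (n - 1) < q ^ n" using assms(1) nn by (simp add: power_strict_increasing)
  have ev: "even (q ^ (n - 1))" using q nn by simp
  have pos: "0 < q ^ n" using assms(1) by simp
  have "G (q ^ (n - 1)) = word_add q n (G 0) (all_ones n)"
    using cp[OF pos] lt by simp
  then have "even (S n (G (q ^ (n - 1))) + S n (G 0) + n)"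
    using add_par[OF q assms(1) W[OF pos]] by simp
  moreover have "even (S n (G (q ^ (n - 1))) + S n (G 0) + q ^ (n - 1))" using P lt by blast
  ultimately show False using ev nn by simp
qed

end
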